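(* Let $\pi$ be a projective plane of order $q$ and let $2\le n\le q$. Consider the complete bipartite graph $G=K_{n,q}$ with classes $U,V$, $|U|=n$, $|V|=q$. Then: (a) For $n=q$: $n_\pi(K_{q,q})=\binom{q^2+q+1}{2}$. (b) If $n<q$, and for every embedding $\phi$ of $K_{n,q}$ into $\pi$ the points of $\phi(V)$ lie on a line, then $n_\pi(K_{n,q})=2\binom{q^2+q+1}{2}\binom{q}{n}$. (c) If $n=q-1$, then for every embedding $\phi$ of $K_{q-1,q}$ into $\pi$ the points of $\phi(V)$ are collinear, and $n_\pi(K_{q-1,q})=q^2(q+1)(q^2+q+1)$.
   Context: A finite projective plane of order $q$ has $q^2+q+1$ points and lines, $q+1$ points on each line and $q+1$ lines through each point; any two distinct points lie on a unique line and any two lines meet in a unique point. An embedding of a simple graph $G=(V,E)$ into $\pi$ is an injective map $\phi$ from $V$ to the points of $\pi$ such that the induced map sending an edge $ab$ to the line through $\phi(a),\phi(b)$ is injective on $E$. Two embeddings $\phi,\psi$ are equivalent if $\psi=\phi\circ\alpha$ for some graph automorphism $\alpha$ of $G$; $n_\pi(G)$ is the number of equivalence classes of embeddings of $G$ into $\pi$ (equivalently, the number of distinct images, i.e. point sets $\phi(V)$ together with the line sets of embedded edges and induced incidence). *)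

theory Defs
  imports Main "HOL-Library.FuncSet"
begin

definition projective_plane :: "'p set \<Rightarrow> 'p set set \<Rightarrow> nat \<Rightarrow> bool" where
  "projective_plane P L q \<longleftrightarrow>
     finite P \<and> finite L \<and>
     card P = q^2 + q + 1 \<and> card L = q^2 + q + 1 \<and>
     (\<forall>l\<in>L. l \<subseteq> P \<and> card l = q + 1) \<and>
     (\<forall>x\<in>P. card {l\<in>L. x \<in> l} = q + 1) \<and>
     (\<forall>x\<in>P. \<forall>y\<in>P. x \<noteq> y \<longrightarrow> (\<exists>!l. l \<in> L \<and> x \<in> l \<and> y \<in> l)) \<and>
     (\<forall>l\<in>L. \<forall>m\<in>L. l \<noteq> m \<longrightarrow> (\<exists>!x. x \<in> P \<and> x \<in> l \<and> x \<in> m))"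

definition edge_line :: "'p set set \<Rightarrow> ('v \<Rightarrow> 'p) \<Rightarrow> 'v set \<Rightarrow> 'p set" where
  "edge_line L \<phi> e = (THE l. l \<in> L \<and> \<phi> ` e \<subseteq> l)"

text \<open>Simple graph: vertex set Vs, edge set E of 2-element subsets of Vs.
Embeddings are taken extensional on Vs (values outside Vs fixed to undefined).\<close>
definition embeddings :: "'p set \<Rightarrow> 'p set set \<Rightarrow> 'v set \<Rightarrow> 'v set set \<Rightarrow> ('v \<Rightarrow> 'p) set" where
  "embeddings P L Vs E =
     {\<phi> \<in> Vs \<rightarrow>\<^sub>E P. inj_on \<phi> Vs \<and> inj_on (edge_line L \<phi>) E}"

definition graph_automorphisms :: "'v set \<Rightarrow> 'v set set \<Rightarrow> ('v \<Rightarrow> 'v) set" where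
  "graph_automorphisms Vs E =
     {\<alpha>. bij_betw \<alpha> Vs Vs \<and> (\<forall>a\<in>Vs. \<forall>b\<in>Vs. {a, b} \<in> E \<longleftrightarrow> {\<alpha> a, \<alpha> b} \<in> E)}"

definition emb_equiv :: "'v set \<Rightarrow> 'v set set \<Rightarrow> (('v \<Rightarrow> 'p) \<times> ('v \<Rightarrow> 'p)) set" where
  "emb_equiv Vs E = {(\<phi>, \<psi>). \<exists>\<alpha>\<in>graph_automorphisms Vs E. \<forall>v\<in>Vs. \<psi> v = \<phi> (\<alpha> v)}"

definition n_emb :: "'p set \<Rightarrow> 'p set set \<Rightarrow> 'v set \<Rightarrow> 'v set set \<Rightarrow> nat" where
  "n_emb P L Vs E = card (embeddings P L Vs E // emb_equiv Vs E)"

definition KU :: "nat \<Rightarrow> (nat + nat) set" where "KU n = Inl ` {..<n}"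
definition KV :: "nat \<Rightarrow> (nat + nat) set" where "KV m = Inr ` {..<m}"
definition K_verts :: "nat \<Rightarrow> nat \<Rightarrow> (nat + nat) set" where
  "K_verts n m = KU n \<union> KV m"
definition K_edges :: "nat \<Rightarrow> nat \<Rightarrow> (nat + nat) set set" where
  "K_edges n m = {{u, v} | u v. u \<in> KU n \<and> v \<in> KV m}"

end

theory Submission
  imports Defs
begin


definition ln :: "'p set set \<Rightarrow> 'p \<Rightarrow> 'p \<Rightarrow> 'p set" where
  "ln L x y = (THE l. l \<in> L \<and> x \<in> l \<and> y \<in> l)"

lemma ln_sym: "ln L x y = ln L y x"
  unfolding ln_def by metis

definition good :: "'p set set \<Rightarrow> 'p set \<Rightarrow> 'p set \<Rightarrow> bool" where
  "good L A B \<longleftrightarrow> (\<forall>a\<in>A. \<forall>a'\<in>A. \<forall>b\<in>B. \<forall>b'\<in>B. ln L a b = ln L a' b' \<longrightarrow> a = a' \<and> b = b')"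

definition Good :: "'p set \<Rightarrow> 'p set set \<Rightarrow> nat \<Rightarrow> nat \<Rightarrow> ('p set \<times> 'p set) set" where
  "Good P L n k = {(A,B). A \<subseteq> P \<and> B \<subseteq> P \<and> A \<inter> B = {} \<and> card A = n \<and> card B = k \<and> good L A B}"

lemma two_elems: assumes "2 \<le> card X" shows "\<exists>x\<in>X. \<exists>y\<in>X. x \<noteq> y"
proof -
  have f: "finite X" using assms card.infinite by fastforce
  have "\<not> card X \<le> Suc 0" using assms by simp
  then show ?thesis using card_le_Suc0_iff_eq[OF f] by blast
qed

context fixes P :: "'p set" and L q assumes pp: "projective_plane P L q"
begin

lemma finP: "finite P" using pp unfolding projective_plane_def by auto
lemma finL: "finite L" using pp unfolding projective_plane_def by auto
lemma cardP: "card P = q^2+q+1" using pp unfolding projective_plane_def by auto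
lemma cardL: "card L = q^2+q+1" using pp unfolding projective_plane_def by auto
lemma line_sub: "l \<in> L \<Longrightarrow> l \<subseteq> P" using pp unfolding projective_plane_def by auto
lemma card_line: "l \<in> L \<Longrightarrow> card l = q + 1" using pp unfolding projective_plane_def by auto
lemma fin_line: "l \<in> L \<Longrightarrow> finite l" using line_sub finP finite_subset by blast
lemma card_pencil: "x \<in> P \<Longrightarrow> card {l\<in>L. x \<in> l} = q + 1" using pp unfolding projective_plane_def by auto
lemma uniq_line: "x \<in> P \<Longrightarrow> y \<in> P \<Longrightarrow> x \<noteq> y \<Longrightarrow> \<exists>!l. l \<in> L \<and> x \<in> l \<and> y \<in> l"
  using pp unfolding projective_plane_def by auto
lemma meet: "l \<in> L \<Longrightarrow> m \<in> L \<Longrightarrow> l \<noteq> m \<Longrightarrow> \<exists>!x. x \<in> P \<and> x \<in> l \<and> x \<in> m"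
  using pp unfolding projective_plane_def by auto

lemma ln_props: assumes "x \<in> P" "y \<in> P" "x \<noteq> y"
  shows "ln L x y \<in> L" "x \<in> ln L x y" "y \<in> ln L x y"
proof -
  have "ln L x y \<in> L \<and> x \<in> ln L x y \<and> y \<in> ln L x y"
    unfolding ln_def using theI'[OF uniq_line[OF assms]] .
  then show "ln L x y \<in> L" "x \<in> ln L x y" "y \<in> ln L x y" by auto
qed

lemma ln_eq: assumes "l \<in> L" "x \<in> l" "y \<in> l" "x \<noteq> y" shows "ln L x y = l"
proof -
  have xy: "x \<in> P" "y \<in> P" using assms line_sub by auto
  show ?thesis unfolding ln_def
    using uniq_line[OF xy assms(4)] assms by (metis (mono_tags, lifting) the_equality)
qed

lemma lines_eq2: assumes "l \<in> L" "m \<in> L" "x \<in> l" "y \<in> l" "x \<in> m" "y \<in> m" "x \<noteq> y"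
  shows "l = m"
  using ln_eq[OF assms(1,3,4,7)] ln_eq[OF assms(2,5,6,7)] by simp

lemma lines_eq_card: assumes "l \<in> L" "m \<in> L" "X \<subseteq> l" "X \<subseteq> m" "2 \<le> card X"
  shows "l = m"
proof -
  obtain x y where xy: "x \<in> X" "y \<in> X" "x \<noteq> y"
    using two_elems[OF assms(5)] by blast
  show ?thesis using lines_eq2[OF assms(1,2), of x y] xy assms(3,4) by blast
qed

lemma card_diff_lines: assumes "l \<in> L" "m \<in> L" "l \<noteq> m" shows "card (l - m) = q"
proof -
  from meet[OF assms] obtain x where x: "x \<in> P \<and> x \<in> l \<and> x \<in> m"
    and xu: "\<forall>y. y \<in> P \<and> y \<in> l \<and> y \<in> m \<longrightarrow> y = x" by (rule ex1E)
  have "l \<inter> m = {x}"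
  proof
    show "l \<inter> m \<subseteq> {x}"
    proof
      fix y assume y: "y \<in> l \<inter> m"
      then have "y \<in> P" using line_sub[OF assms(1)] by blast
      then have "y = x" using xu[rule_format, of y] y by blast
      then show "y \<in> {x}" by simp
    qed
    show "{x} \<subseteq> l \<inter> m" using x by blast
  qed
  then have "l - m = l - {x}" by auto
  then show ?thesis using card_line[OF assms(1)] x fin_line[OF assms(1)] by simp
qed

lemma good_sym: "good L A B \<Longrightarrow> good L B A"
  unfolding good_def using ln_sym by metis

lemma good_lines: assumes "l \<in> L" "m \<in> L" "l \<noteq> m" "A \<subseteq> l - m" "B \<subseteq> m - l"
  shows "good L A B"
  unfolding good_def
proof (intro ballI impI)
  fix a a' b b' assume h: "a \<in> A" "a' \<in> A" "b \<in> B" "b' \<in> B" "ln L a b = ln L a' b'"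
  have P: "a \<in> P" "a' \<in> P" "b \<in> P" "b' \<in> P" using h assms line_sub by blast+
  have ne: "a \<noteq> b" "a' \<noteq> b'" using h assms by auto
  note p1 = ln_props[OF P(1) P(3) ne(1)] and p2 = ln_props[OF P(2) P(4) ne(2)]
  have "a = a'"
  proof (rule ccontr)
    assume "a \<noteq> a'"
    then have "ln L a b = l" using lines_eq2[OF p1(1) assms(1) p1(2), of a'] h p2 assms by auto
    then show False using p1 h assms by auto
  qed
  moreover have "b = b'"
  proof (rule ccontr)
    assume "b \<noteq> b'"
    then have "ln L a b = m" using lines_eq2[OF p1(1) assms(2) p1(3), of b'] h p2 assms by auto
    then show False using p1 h assms by auto
  qed
  ultimately show "a = a' \<and> b = b'" by simp
qed


lemma collinear:
  assumes AP: "A \<subseteq> P" and BP: "B \<subseteq> P" and dis: "A \<inter> B = {}" and cB: "card B = q"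
    and g: "good L A B" and a0: "a0 \<in> A"
  shows "\<exists>l\<in>L. A \<subseteq> l \<and> l \<inter> B = {}"
proof -
  have a0P: "a0 \<in> P" using a0 AP by auto
  define Lu where "Lu = {l\<in>L. a0 \<in> l}"
  define M where "M = (\<lambda>b. ln L a0 b) ` B"
  have finB: "finite B" using BP finP finite_subset by blast
  have ne: "\<And>b. b \<in> B \<Longrightarrow> a0 \<noteq> b" using dis a0 by auto
  have MLu: "M \<subseteq> Lu"
  proof
    fix x assume "x \<in> M"
    then obtain b where b: "b \<in> B" "x = ln L a0 b" unfolding M_def by auto
    then show "x \<in> Lu" unfolding Lu_def using ln_props[OF a0P _ ne[OF b(1)]] BP by auto
  qed
  have inj: "inj_on (\<lambda>b. ln L a0 b) B"
    using g a0 unfolding good_def inj_on_def by blast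
  have cM: "card M = q" unfolding M_def using card_image[OF inj] cB by simp
  have cLu: "card Lu = q + 1" unfolding Lu_def using card_pencil[OF a0P] .
  have finLu: "finite Lu" unfolding Lu_def using finL by auto
  have "card (Lu - M) = 1" using card_Diff_subset[OF finite_subset[OF MLu finLu] MLu] cM cLu by simp
  then obtain l where l: "Lu - M = {l}" using card_1_singletonE by blast
  have lL: "l \<in> L" "a0 \<in> l" "l \<notin> M" using l unfolding Lu_def by auto
  have "l \<inter> B = {}"
  proof (rule ccontr)
    assume "l \<inter> B \<noteq> {}"
    then obtain b where b: "b \<in> l" "b \<in> B" by auto
    then have "ln L a0 b = l" using ln_eq[OF lL(1) lL(2) b(1) ne[OF b(2)]] by simp
    then show False using lL(3) b unfolding M_def by auto
  qed
  moreover have "A \<subseteq> l"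
  proof
    fix a assume a: "a \<in> A"
    show "a \<in> l"
    proof (cases "a = a0")
      case True then show ?thesis using lL by simp
    next
      case False
      have aP: "a \<in> P" using a AP by auto
      note p = ln_props[OF a0P aP False[symmetric]]
      have "ln L a0 a \<notin> M"
      proof
        assume "ln L a0 a \<in> M"
        then obtain b where b: "b \<in> B" "ln L a0 a = ln L a0 b" unfolding M_def by auto
        have bP: "b \<in> P" using b BP by auto
        have bin: "b \<in> ln L a0 a" using b ln_props[OF a0P bP ne[OF b(1)]] by simp
        have abne: "a \<noteq> b" using a b dis by auto
        have "ln L a b = ln L a0 a" using ln_eq[OF p(1) p(3) bin abne] .
        then have "ln L a b = ln L a0 b" using b by simp
        then show False using g a a0 b False unfolding good_def by blast
      qed
      then have "ln L a0 a \<in> Lu - M" unfolding Lu_def using p by auto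
      then show ?thesis using l p by auto
    qed
  qed
  ultimately show ?thesis using lL by blast
qed

lemma collinear_c:
  assumes AP: "A \<subseteq> P" and BP: "B \<subseteq> P" and dis: "A \<inter> B = {}" and cB: "card B = q"
    and cA: "card A = q - 1" and q3: "3 \<le> q" and g: "good L A B"
  shows "\<exists>m\<in>L. B \<subseteq> m"
proof -
  have "A \<noteq> {}" using cA q3 by auto
  then obtain a0 where a0: "a0 \<in> A" by auto
  obtain l where l: "l \<in> L" "A \<subseteq> l" "l \<inter> B = {}" using collinear[OF AP BP dis cB g a0] by blast
  have fl: "finite l" using fin_line l by auto
  have "card (l - A) = 2" using card_Diff_subset[OF finite_subset[OF l(2) fl] l(2)] card_line[OF l(1)] cA q3
    by simp
  then obtain a b where ab: "l - A = {a, b}" "a \<noteq> b" by (meson card_2_iff)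
  have abl: "a \<in> l" "b \<in> l" "a \<notin> A" "b \<notin> A" using ab by auto
  have abP: "a \<in> P" "b \<in> P" using abl line_sub l by auto
  have key: "a \<in> ln L v w \<or> b \<in> ln L v w" if vw: "v \<in> B" "w \<in> B" "v \<noteq> w" for v w
  proof -
    have vwP: "v \<in> P" "w \<in> P" using vw BP by auto
    note p = ln_props[OF vwP vw(3)]
    have "ln L v w \<noteq> l" using p l vw by auto
    from meet[OF p(1) l(1) this] obtain x where "x \<in> P \<and> x \<in> ln L v w \<and> x \<in> l" by (rule ex1E)
    then have x: "x \<in> P" "x \<in> ln L v w" "x \<in> l" by auto
    have xv: "x \<noteq> v" "x \<noteq> w" using x l vw by auto
    have "x \<notin> A"
    proof
      assume xA: "x \<in> A"
      have "ln L x v = ln L v w" using ln_eq[OF p(1) x(2) p(2) xv(1)] .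
      moreover have "ln L x w = ln L v w" using ln_eq[OF p(1) x(2) p(3) xv(2)] .
      ultimately show False using g xA vw unfolding good_def by metis
    qed
    then have "x = a \<or> x = b" using ab x by auto
    then show ?thesis using x by auto
  qed
  have "B \<noteq> {}" using cB q3 by auto
  then obtain v0 where v0: "v0 \<in> B" by auto
  have v0P: "v0 \<in> P" using v0 BP by auto
  have nea: "a \<noteq> v0" "b \<noteq> v0" using abl l v0 by auto
  note pa = ln_props[OF abP(1) v0P nea(1)] and pb = ln_props[OF abP(2) v0P nea(2)]
  define LA where "LA = ln L a v0"
  define LB where "LB = ln L b v0"
  have BAB: "w \<in> LA \<or> w \<in> LB" if w: "w \<in> B" for w
  proof (cases "w = v0")
    case True then show ?thesis using pa LA_def by simp
  next
    case False
    have wP: "w \<in> P" using w BP by auto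
    note pw = ln_props[OF v0P wP False[symmetric]]
    from key[OF v0 w False[symmetric]] show ?thesis
    proof
      assume "a \<in> ln L v0 w"
      then have "ln L v0 w = LA" unfolding LA_def using ln_eq[OF pw(1) _ pw(2) nea(1)] by simp
      then show ?thesis using pw by auto
    next
      assume "b \<in> ln L v0 w"
      then have "ln L v0 w = LB" unfolding LB_def using ln_eq[OF pw(1) _ pw(2) nea(2)] by simp
      then show ?thesis using pw by auto
    qed
  qed
  show ?thesis
  proof (rule ccontr)
    assume nc: "\<not> ?thesis"
    have "\<not> B \<subseteq> LB" using nc pb LB_def by auto
    then obtain w1 where w1: "w1 \<in> B" "w1 \<notin> LB" by auto
    have "\<not> B \<subseteq> LA" using nc pa LA_def by auto
    then obtain w2 where w2: "w2 \<in> B" "w2 \<notin> LA" by auto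
    have w1A: "w1 \<in> LA" using BAB w1 by auto
    have w2B: "w2 \<in> LB" using BAB w2 by auto
    have ne12: "w1 \<noteq> w2" using w1A w2 by auto
    have wP: "w1 \<in> P" "w2 \<in> P" using w1 w2 BP by auto
    note pw = ln_props[OF wP ne12]
    have naw: "a \<noteq> w1" "b \<noteq> w2" using abl l w1 w2 by auto
    from key[OF w1(1) w2(1) ne12] show False
    proof
      assume "a \<in> ln L w1 w2"
      then have "ln L w1 w2 = LA" using ln_eq[OF pw(1) _ pw(2) naw(1)] ln_eq[OF pa(1) pa(2) w1A[unfolded LA_def] naw(1)] LA_def by simp
      then show False using pw w2 by auto
    next
      assume "b \<in> ln L w1 w2"
      then have "ln L w1 w2 = LB" using ln_eq[OF pw(1) _ pw(3) naw(2)] ln_eq[OF pb(1) pb(2) w2B[unfolded LB_def] naw(2)] LB_def by simp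
      then show False using pw w1 by auto
    qed
  qed
qed

end



definition gpair :: "(nat + nat \<Rightarrow> 'p) \<Rightarrow> nat \<Rightarrow> nat \<Rightarrow> 'p set set" where
  "gpair \<phi> n k = {\<phi> ` KU n, \<phi> ` KV k}"

lemma KUKV_disj: "KU n \<inter> KV k = {}" unfolding KU_def KV_def by auto

lemma edge_char: assumes "a \<in> K_verts n k" "b \<in> K_verts n k"
  shows "{a,b} \<in> K_edges n k \<longleftrightarrow> (a \<in> KU n \<and> b \<in> KV k) \<or> (a \<in> KV k \<and> b \<in> KU n)"
proof
  assume "{a,b} \<in> K_edges n k"
  then obtain u v where "{a,b} = {u,v}" "u \<in> KU n" "v \<in> KV k" unfolding K_edges_def by auto
  then show "(a \<in> KU n \<and> b \<in> KV k) \<or> (a \<in> KV k \<and> b \<in> KU n)" by (auto simp: doubleton_eq_iff)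
next
  assume "(a \<in> KU n \<and> b \<in> KV k) \<or> (a \<in> KV k \<and> b \<in> KU n)"
  then show "{a,b} \<in> K_edges n k" unfolding K_edges_def by (auto simp: insert_commute)
qed

lemma edges_eq: assumes "u \<in> KU n" "u' \<in> KU n" "v \<in> KV k" "v' \<in> KV k" "{u,v} = {u',v'}"
  shows "u = u' \<and> v = v'"
  using assms KUKV_disj[of n k] by (auto simp: doubleton_eq_iff)

lemma edge_line_pair: "edge_line L \<phi> {u,v} = ln L (\<phi> u) (\<phi> v)"
  unfolding edge_line_def ln_def by simp

lemma verts_cases: "x \<in> K_verts n k \<Longrightarrow> (x \<in> KU n \<Longrightarrow> R) \<Longrightarrow> (x \<in> KV k \<Longrightarrow> R) \<Longrightarrow> R"
  unfolding K_verts_def by auto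

lemma equiv_char:
  assumes n: "1 \<le> n" and k: "1 \<le> k" and inj: "inj_on \<phi> (K_verts n k)"
  shows "(\<phi>, \<chi>) \<in> emb_equiv (K_verts n k) (K_edges n k) \<longleftrightarrow>
         inj_on \<chi> (K_verts n k) \<and> gpair \<chi> n k = gpair \<phi> n k"
proof -
  let ?V = "K_verts n k" and ?E = "K_edges n k" and ?U = "KU n" and ?W = "KV k"
  have UV: "?U \<subseteq> ?V" "?W \<subseteq> ?V" unfolding K_verts_def by auto
  have dj: "?U \<inter> ?W = {}" by (rule KUKV_disj)
  have "Inl 0 \<in> ?U" using n unfolding KU_def by auto
  then obtain u0 where u0: "u0 \<in> ?U" by blast
  have "Inr 0 \<in> ?W" using k unfolding KV_def by auto
  then obtain v0 where v0: "v0 \<in> ?W" by blast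
  show ?thesis
  proof
    assume "(\<phi>, \<chi>) \<in> emb_equiv ?V ?E"
    then obtain \<alpha> where al: "bij_betw \<alpha> ?V ?V" "\<forall>a\<in>?V. \<forall>b\<in>?V. {a, b} \<in> ?E \<longleftrightarrow> {\<alpha> a, \<alpha> b} \<in> ?E"
      and ch: "\<forall>v\<in>?V. \<chi> v = \<phi> (\<alpha> v)"
      unfolding emb_equiv_def graph_automorphisms_def by auto
    have img: "\<chi> ` X = \<phi> ` (\<alpha> ` X)" if "X \<subseteq> ?V" for X
    proof -
      have "\<chi> ` X = (\<lambda>x. \<phi> (\<alpha> x)) ` X" using ch that by (intro image_cong) auto
      then show ?thesis by (simp add: image_image)
    qed
    have inj\<chi>: "inj_on \<chi> ?V"
    proof -
      have "inj_on (\<phi> \<circ> \<alpha>) ?V" using comp_inj_on[OF bij_betw_imp_inj_on[OF al(1)]] inj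
        al(1) bij_betw_imp_surj_on by metis
      then show ?thesis using ch by (simp add: inj_on_def)
    qed
    have aV: "\<alpha> x \<in> ?V" if "x \<in> ?V" for x using al(1) that bij_betwE by blast
    have e0: "{\<alpha> u0, \<alpha> v0} \<in> ?E" using al(2) u0 v0 UV edge_char[of u0 n k v0] by auto
    have cls: "(\<alpha> ` ?U = ?U \<and> \<alpha> ` ?W = ?W) \<or> (\<alpha> ` ?U = ?W \<and> \<alpha> ` ?W = ?U)"
    proof -
      have sub: "\<alpha> ` ?U \<subseteq> C1 \<and> \<alpha> ` ?W \<subseteq> C2"
        if c: "\<alpha> u0 \<in> C1" "\<alpha> v0 \<in> C2" "(C1 = ?U \<and> C2 = ?W) \<or> (C1 = ?W \<and> C2 = ?U)" for C1 C2
      proof -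
        have "\<alpha> u \<in> C1" if u: "u \<in> ?U" for u
        proof -
          have "{u, v0} \<in> ?E" using edge_char[of u n k v0] u v0 UV by auto
          then have "{\<alpha> u, \<alpha> v0} \<in> ?E" using al(2) u v0 UV by auto
          then show ?thesis using edge_char[of "\<alpha> u" n k "\<alpha> v0"] aV u v0 UV c dj by blast
        qed
        moreover have "\<alpha> v \<in> C2" if v: "v \<in> ?W" for v
        proof -
          have "{u0, v} \<in> ?E" using edge_char[of u0 n k v] u0 v UV by auto
          then have "{\<alpha> u0, \<alpha> v} \<in> ?E" using al(2) u0 v UV by auto
          then show ?thesis using edge_char[of "\<alpha> u0" n k "\<alpha> v"] aV u0 v UV c dj by blast
        qed
        ultimately show ?thesis by auto
      qed
      have surj: "\<alpha> ` ?V = ?V" using al(1) bij_betw_imp_surj_on by blast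
      have full: "\<alpha> ` ?U = C1 \<and> \<alpha> ` ?W = C2"
        if c: "\<alpha> ` ?U \<subseteq> C1" "\<alpha> ` ?W \<subseteq> C2" "(C1 = ?U \<and> C2 = ?W) \<or> (C1 = ?W \<and> C2 = ?U)" for C1 C2
      proof -
        have "C1 \<union> C2 = ?U \<union> ?W" using c(3) by blast
        also have "\<dots> = ?V" by (simp add: K_verts_def)
        also have "\<dots> = \<alpha> ` ?V" using surj by simp
        also have "\<dots> = \<alpha> ` ?U \<union> \<alpha> ` ?W" by (simp add: K_verts_def image_Un)
        finally have un: "C1 \<union> C2 = \<alpha> ` ?U \<union> \<alpha> ` ?W" .
        have "C1 \<inter> C2 = {}" using c(3) dj by (elim disjE) (simp_all add: Int_commute)
        then show ?thesis using un c(1,2) by blast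
      qed
      from e0 have "(\<alpha> u0 \<in> ?U \<and> \<alpha> v0 \<in> ?W) \<or> (\<alpha> u0 \<in> ?W \<and> \<alpha> v0 \<in> ?U)"
        using edge_char[of "\<alpha> u0" n k "\<alpha> v0"] aV u0 v0 UV by blast
      then show ?thesis
      proof
        assume "\<alpha> u0 \<in> ?U \<and> \<alpha> v0 \<in> ?W"
        then show ?thesis using full[of ?U ?W] sub[of ?U ?W] by blast
      next
        assume "\<alpha> u0 \<in> ?W \<and> \<alpha> v0 \<in> ?U"
        then show ?thesis using full[of ?W ?U] sub[of ?W ?U] by blast
      qed
    qed
    have "gpair \<chi> n k = {\<phi> ` (\<alpha> ` ?U), \<phi> ` (\<alpha> ` ?W)}"
      unfolding gpair_def using img[OF UV(1)] img[OF UV(2)] by simp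
    also have "\<dots> = gpair \<phi> n k" using cls unfolding gpair_def
      by (elim disjE) (simp_all add: insert_commute)
    finally have "gpair \<chi> n k = gpair \<phi> n k" .
    then show "inj_on \<chi> ?V \<and> gpair \<chi> n k = gpair \<phi> n k" using inj\<chi> by simp
  next
    assume h: "inj_on \<chi> ?V \<and> gpair \<chi> n k = gpair \<phi> n k"
    then have g: "(\<chi> ` ?U = \<phi> ` ?U \<and> \<chi> ` ?W = \<phi> ` ?W) \<or> (\<chi> ` ?U = \<phi> ` ?W \<and> \<chi> ` ?W = \<phi> ` ?U)"
      unfolding gpair_def by (auto simp: doubleton_eq_iff)
    have im: "\<chi> ` ?V = \<phi> ` ?V" using g unfolding K_verts_def by (auto simp: image_Un)
    define \<alpha> where "\<alpha> = (\<lambda>x. inv_into ?V \<phi> (\<chi> x))"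
    have aV: "\<alpha> x \<in> ?V" and pa: "\<phi> (\<alpha> x) = \<chi> x" if "x \<in> ?V" for x
      using im that inv_into_into[of "\<chi> x" \<phi> ?V] f_inv_into_f[of "\<chi> x" \<phi> ?V] unfolding \<alpha>_def by auto
    have ia: "inj_on \<alpha> ?V" using h pa unfolding inj_on_def by metis
    have sa: "\<alpha> ` ?V = ?V"
    proof
      show "\<alpha> ` ?V \<subseteq> ?V" using aV by auto
      show "?V \<subseteq> \<alpha> ` ?V"
      proof
        fix y assume y: "y \<in> ?V"
        then obtain x where x: "x \<in> ?V" "\<chi> x = \<phi> y" using im by (metis imageE imageI)
        then have "\<alpha> x = y" using pa aV inj y unfolding inj_on_def by metis
        then show "y \<in> \<alpha> ` ?V" using x by auto
      qed
    qed
    have dji: "\<phi> ` ?U \<inter> \<phi> ` ?W = {}" using inj UV dj inj_on_image_Int[OF inj UV] by auto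
    have clsU: "x \<in> ?U \<longleftrightarrow> \<alpha> x \<in> C1" and clsW: "x \<in> ?W \<longleftrightarrow> \<alpha> x \<in> C2"
      if c: "\<chi> ` ?U = \<phi> ` C1" "\<chi> ` ?W = \<phi> ` C2" "(C1 = ?U \<and> C2 = ?W) \<or> (C1 = ?W \<and> C2 = ?U)"
        and x: "x \<in> ?V" for x C1 C2
    proof -
      have A: "\<alpha> x \<in> C1" if "x \<in> ?U" for x
      proof -
        have e: "\<phi> (\<alpha> x) = \<chi> x" using pa[of x] that UV by blast
        have "\<chi> x \<in> \<chi> ` ?U" using that by (rule imageI)
        then have "\<phi> (\<alpha> x) \<in> \<phi> ` C1" using e c by simp
        then obtain y where "y \<in> C1" "\<phi> (\<alpha> x) = \<phi> y" by auto
        then show ?thesis using inj aV[of x] that UV c unfolding inj_on_def by (metis subsetD)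
      qed
      have B: "\<alpha> x \<in> C2" if "x \<in> ?W" for x
      proof -
        have e: "\<phi> (\<alpha> x) = \<chi> x" using pa[of x] that UV by blast
        have "\<chi> x \<in> \<chi> ` ?W" using that by (rule imageI)
        then have "\<phi> (\<alpha> x) \<in> \<phi> ` C2" using e c by simp
        then obtain y where "y \<in> C2" "\<phi> (\<alpha> x) = \<phi> y" by auto
        then show ?thesis using inj aV[of x] that UV c unfolding inj_on_def by (metis subsetD)
      qed
      have d12: "C1 \<inter> C2 = {}" using c dj by auto
      show "x \<in> ?U \<longleftrightarrow> \<alpha> x \<in> C1" using A B x d12 by (auto elim: verts_cases)
      show "x \<in> ?W \<longleftrightarrow> \<alpha> x \<in> C2" using A B x d12 by (auto elim: verts_cases)
    qed
    have aut: "\<alpha> \<in> graph_automorphisms ?V ?E"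
    proof -
      have "{a, b} \<in> ?E \<longleftrightarrow> {\<alpha> a, \<alpha> b} \<in> ?E" if ab: "a \<in> ?V" "b \<in> ?V" for a b
      proof -
        from g show ?thesis
        proof
          assume c: "\<chi> ` ?U = \<phi> ` ?U \<and> \<chi> ` ?W = \<phi> ` ?W"
          have c3: "(?U = ?U \<and> ?W = ?W) \<or> (?U = ?W \<and> ?W = ?U)" by simp
          note cc = clsU[OF c[THEN conjunct1] c[THEN conjunct2] c3 ab(1)] clsU[OF c[THEN conjunct1] c[THEN conjunct2] c3 ab(2)]
            clsW[OF c[THEN conjunct1] c[THEN conjunct2] c3 ab(1)] clsW[OF c[THEN conjunct1] c[THEN conjunct2] c3 ab(2)]
          show ?thesis unfolding edge_char[OF ab] edge_char[OF aV[OF ab(1)] aV[OF ab(2)]]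
            using cc by blast
        next
          assume c: "\<chi> ` ?U = \<phi> ` ?W \<and> \<chi> ` ?W = \<phi> ` ?U"
          have c3: "(?W = ?U \<and> ?U = ?W) \<or> (?W = ?W \<and> ?U = ?U)" by simp
          note cc = clsU[OF c[THEN conjunct1] c[THEN conjunct2] c3 ab(1)] clsU[OF c[THEN conjunct1] c[THEN conjunct2] c3 ab(2)]
            clsW[OF c[THEN conjunct1] c[THEN conjunct2] c3 ab(1)] clsW[OF c[THEN conjunct1] c[THEN conjunct2] c3 ab(2)]
          show ?thesis unfolding edge_char[OF ab] edge_char[OF aV[OF ab(1)] aV[OF ab(2)]]
            using cc by blast
        qed
      qed
      then show ?thesis unfolding graph_automorphisms_def bij_betw_def using ia sa by auto
    qed
    show "(\<phi>, \<chi>) \<in> emb_equiv ?V ?E" unfolding emb_equiv_def using aut pa by (auto intro!: bexI[of _ \<alpha>])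
  qed
qed

lemma n_emb_card:
  fixes P :: "'p set" and L :: "'p set set"
  assumes n: "1 \<le> n" and k: "1 \<le> k"
  shows "n_emb P L (K_verts n k) (K_edges n k) = card ((\<lambda>\<phi>. gpair \<phi> n k) ` embeddings P L (K_verts n k) (K_edges n k))"
proof -
  let ?V = "K_verts n k" and ?E = "K_edges n k"
  let ?M = "embeddings P L ?V ?E" and ?R = "emb_equiv ?V ?E"
  define C where "C = (\<lambda>S. {\<chi> :: nat + nat \<Rightarrow> 'p. inj_on \<chi> ?V \<and> gpair \<chi> n k = S})"
  have cls: "?R `` {\<phi>} = C (gpair \<phi> n k)" if "\<phi> \<in> ?M" for \<phi>
  proof -
    have "inj_on \<phi> ?V" using that unfolding embeddings_def by auto
    then show ?thesis unfolding C_def using equiv_char[OF n k] by auto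
  qed
  have q: "?M // ?R = C ` ((\<lambda>\<phi>. gpair \<phi> n k) ` ?M)"
    unfolding quotient_def using cls by auto
  have "inj_on C ((\<lambda>\<phi>. gpair \<phi> n k) ` ?M)"
  proof (rule inj_onI)
    fix S T assume S: "S \<in> (\<lambda>\<phi>. gpair \<phi> n k) ` ?M" and T: "T \<in> (\<lambda>\<phi>. gpair \<phi> n k) ` ?M" and e: "C S = C T"
    from S obtain \<phi> where "\<phi> \<in> ?M" "S = gpair \<phi> n k" by auto
    then have "\<phi> \<in> C S" unfolding C_def embeddings_def by auto
    then show "S = T" using e unfolding C_def by auto
  qed
  then show ?thesis unfolding n_emb_def q by (simp add: card_image)
qed




context fixes P :: "'p set" and L q assumes pp: "projective_plane P L q"
begin

lemma emb_Good:
  assumes "\<phi> \<in> embeddings P L (K_verts n k) (K_edges n k)"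
  shows "(\<phi> ` KU n, \<phi> ` KV k) \<in> Good P L n k"
proof -
  let ?V = "K_verts n k" and ?E = "K_edges n k"
  have h: "\<phi> \<in> ?V \<rightarrow>\<^sub>E P" "inj_on \<phi> ?V" "inj_on (edge_line L \<phi>) ?E"
    using assms unfolding embeddings_def by auto
  have UV: "KU n \<subseteq> ?V" "KV k \<subseteq> ?V" unfolding K_verts_def by auto
  have sub: "\<phi> ` KU n \<subseteq> P" "\<phi> ` KV k \<subseteq> P" using h(1) UV by auto
  have dj: "\<phi> ` KU n \<inter> \<phi> ` KV k = {}" using inj_on_image_Int[OF h(2) UV] KUKV_disj by auto
  have c: "card (\<phi> ` KU n) = n" "card (\<phi> ` KV k) = k"
    using card_image[OF inj_on_subset[OF h(2) UV(1)]] card_image[OF inj_on_subset[OF h(2) UV(2)]]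
    unfolding KU_def KV_def by (auto simp: card_image)
  have "good L (\<phi> ` KU n) (\<phi> ` KV k)"
    unfolding good_def
  proof (intro ballI impI)
    fix a a' b b' assume a: "a \<in> \<phi> ` KU n" "a' \<in> \<phi> ` KU n" "b \<in> \<phi> ` KV k" "b' \<in> \<phi> ` KV k"
      and e: "ln L a b = ln L a' b'"
    obtain u u' v v' where uv: "u \<in> KU n" "u' \<in> KU n" "v \<in> KV k" "v' \<in> KV k"
      "a = \<phi> u" "a' = \<phi> u'" "b = \<phi> v" "b' = \<phi> v'" using a by auto
    have E: "{u,v} \<in> ?E" "{u',v'} \<in> ?E" unfolding K_edges_def using uv by auto
    have "edge_line L \<phi> {u,v} = edge_line L \<phi> {u',v'}" using e uv by (simp add: edge_line_pair)
    then have "{u,v} = {u',v'}" using h(3) E unfolding inj_on_def by blast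
    then show "a = a' \<and> b = b'" using edges_eq[OF uv(1-4)] uv by simp
  qed
  then show ?thesis unfolding Good_def using sub dj c by auto
qed

lemma Good_emb:
  assumes "(A,B) \<in> Good P L n k"
  shows "\<exists>\<phi>\<in>embeddings P L (K_verts n k) (K_edges n k). \<phi> ` KU n = A \<and> \<phi> ` KV k = B"
proof -
  let ?V = "K_verts n k" and ?E = "K_edges n k"
  have h: "A \<subseteq> P" "B \<subseteq> P" "A \<inter> B = {}" "card A = n" "card B = k" "good L A B"
    using assms unfolding Good_def by auto
  have fin: "finite A" "finite B" using h finite_subset finP[OF pp] by blast+
  obtain f where f: "bij_betw f {0..<n} A" using ex_bij_betw_nat_finite[OF fin(1)] h(4) by auto
  obtain g where g: "bij_betw g {0..<k} B" using ex_bij_betw_nat_finite[OF fin(2)] h(5) by auto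
  define \<phi> where "\<phi> = restrict (case_sum f g) ?V"
  have pU: "\<phi> (Inl i) = f i" if "i < n" for i using that unfolding \<phi>_def K_verts_def KU_def by auto
  have pV: "\<phi> (Inr j) = g j" if "j < k" for j using that unfolding \<phi>_def K_verts_def KV_def by auto
  have iU: "\<phi> ` KU n = A"
  proof -
    have "\<phi> ` KU n = f ` {0..<n}" unfolding KU_def using pU by (auto simp: image_iff)
    then show ?thesis using f bij_betw_imp_surj_on by metis
  qed
  have iV: "\<phi> ` KV k = B"
  proof -
    have "\<phi> ` KV k = g ` {0..<k}" unfolding KV_def using pV by (auto simp: image_iff)
    then show ?thesis using g bij_betw_imp_surj_on by metis
  qed
  have pi: "\<phi> \<in> ?V \<rightarrow>\<^sub>E P"
  proof -
    have "\<phi> ` ?V \<subseteq> P" using iU iV h unfolding K_verts_def by (auto simp: image_Un)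
    then show ?thesis unfolding \<phi>_def by auto
  qed
  have injU: "inj_on \<phi> (KU n)"
    using f pU unfolding KU_def bij_betw_def inj_on_def by auto
  have injV: "inj_on \<phi> (KV k)"
    using g pV unfolding KV_def bij_betw_def inj_on_def by auto
  have inj: "inj_on \<phi> ?V"
    unfolding K_verts_def using injU injV iU iV h(3) by (auto simp: inj_on_Un)
  have injE: "inj_on (edge_line L \<phi>) ?E"
  proof (rule inj_onI)
    fix e1 e2 assume e: "e1 \<in> ?E" "e2 \<in> ?E" "edge_line L \<phi> e1 = edge_line L \<phi> e2"
    obtain u v where uv: "e1 = {u,v}" "u \<in> KU n" "v \<in> KV k" using e(1) unfolding K_edges_def by auto
    obtain u' v' where uv': "e2 = {u',v'}" "u' \<in> KU n" "v' \<in> KV k" using e(2) unfolding K_edges_def by auto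
    have "ln L (\<phi> u) (\<phi> v) = ln L (\<phi> u') (\<phi> v')" using e(3) uv uv' by (simp add: edge_line_pair)
    then have "\<phi> u = \<phi> u' \<and> \<phi> v = \<phi> v'" using h(6) iU iV uv uv' unfolding good_def by blast
    then have "u = u' \<and> v = v'" using injU injV uv uv' unfolding inj_on_def by blast
    then show "e1 = e2" using uv uv' by simp
  qed
  have "\<phi> \<in> embeddings P L ?V ?E" unfolding embeddings_def using pi inj injE by auto
  then show ?thesis using iU iV by blast
qed

lemma img_Good: "(\<lambda>\<phi>. gpair \<phi> n k) ` embeddings P L (K_verts n k) (K_edges n k) = (\<lambda>(A,B). {A,B}) ` Good P L n k"
proof
  show "(\<lambda>\<phi>. gpair \<phi> n k) ` embeddings P L (K_verts n k) (K_edges n k) \<subseteq> (\<lambda>(A,B). {A,B}) ` Good P L n k"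
    using emb_Good unfolding gpair_def by force
  show "(\<lambda>(A,B). {A,B}) ` Good P L n k \<subseteq> (\<lambda>\<phi>. gpair \<phi> n k) ` embeddings P L (K_verts n k) (K_edges n k)"
  proof
    fix S assume "S \<in> (\<lambda>(A,B). {A,B}) ` Good P L n k"
    then obtain A B where "(A,B) \<in> Good P L n k" "S = {A,B}" by auto
    then show "S \<in> (\<lambda>\<phi>. gpair \<phi> n k) ` embeddings P L (K_verts n k) (K_edges n k)"
      using Good_emb unfolding gpair_def by (metis (no_types, lifting) image_eqI)
  qed
qed


lemma hX: assumes "l \<in> L" "m \<in> L" "l \<noteq> m"
  shows "(\<lambda>x. x - \<Inter>{l,m}) ` {l,m} = {l - m, m - l}"
  by auto

lemma count_a: assumes q2: "2 \<le> q"
  shows "card ((\<lambda>(A,B). {A,B}) ` Good P L q q) = card L choose 2"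
proof -
  define T2 where "T2 = {X. X \<subseteq> L \<and> card X = 2}"
  define h where "h = (\<lambda>X. (\<lambda>x. x - \<Inter>X) ` (X::'p set set))"
  have T2c: "\<exists>l m. X = {l,m} \<and> l \<in> L \<and> m \<in> L \<and> l \<noteq> m" if "X \<in> T2" for X
  proof -
    have X: "X \<subseteq> L" "card X = 2" using that unfolding T2_def by auto
    then obtain l m where "X = {l,m}" "l \<noteq> m" unfolding card_2_iff by blast
    then show ?thesis using X by blast
  qed
  have eq: "(\<lambda>(A,B). {A,B}) ` Good P L q q = h ` T2"
  proof
    show "(\<lambda>(A,B). {A,B}) ` Good P L q q \<subseteq> h ` T2"
    proof
      fix S assume "S \<in> (\<lambda>(A,B). {A,B}) ` Good P L q q"
      then obtain A B where AB: "(A,B) \<in> Good P L q q" "S = {A,B}" by auto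
      have G: "A \<subseteq> P" "B \<subseteq> P" "A \<inter> B = {}" "card A = q" "card B = q" "good L A B"
        using AB unfolding Good_def by auto
      obtain a0 where a0: "a0 \<in> A" using G(4) q2 by (metis card.empty ex_in_conv not_numeral_le_zero)
      obtain b0 where b0: "b0 \<in> B" using G(5) q2 by (metis card.empty ex_in_conv not_numeral_le_zero)
      obtain l where l: "l \<in> L" "A \<subseteq> l" "l \<inter> B = {}" using collinear[OF pp G(1,2,3,5,6) a0] by blast
      obtain m where m: "m \<in> L" "B \<subseteq> m" "m \<inter> A = {}"
        using collinear[OF pp G(2,1) _ G(4) good_sym[OF pp G(6)] b0] G(3) by blast
      have lm: "l \<noteq> m" using a0 l m by auto
      have As: "A \<subseteq> l - m" using l m by blast
      have Bs: "B \<subseteq> m - l" using l m by blast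
      have "A = l - m" using card_subset_eq[OF finite_Diff[OF fin_line[OF pp l(1)]] As]
        card_diff_lines[OF pp l(1) m(1) lm] G(4) by simp
      moreover have "B = m - l" using card_subset_eq[OF finite_Diff[OF fin_line[OF pp m(1)]] Bs]
        card_diff_lines[OF pp m(1) l(1) lm[symmetric]] G(5) by simp
      ultimately have "S = h {l,m}" unfolding h_def using AB(2) hX[OF l(1) m(1) lm] by simp
      moreover have "{l,m} \<in> T2" unfolding T2_def using l m lm by auto
      ultimately show "S \<in> h ` T2" by auto
    qed
    show "h ` T2 \<subseteq> (\<lambda>(A,B). {A,B}) ` Good P L q q"
    proof
      fix S assume "S \<in> h ` T2"
      then obtain l m where lm: "S = h {l,m}" "l \<in> L" "m \<in> L" "l \<noteq> m" using T2c by blast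
      have S: "S = {l - m, m - l}" unfolding lm(1) h_def using hX[OF lm(2-4)] .
      have "(l - m, m - l) \<in> Good P L q q" unfolding Good_def
        using line_sub[OF pp lm(2)] line_sub[OF pp lm(3)] card_diff_lines[OF pp lm(2-4)]
          card_diff_lines[OF pp lm(3,2) lm(4)[symmetric]] good_lines[OF pp lm(2-4), of "l-m" "m-l"] by auto
      then show "S \<in> (\<lambda>(A,B). {A,B}) ` Good P L q q" using S by force
    qed
  qed
  have inj: "inj_on h T2"
  proof (rule inj_onI)
    fix X Y assume X: "X \<in> T2" and Y: "Y \<in> T2" and e: "h X = h Y"
    obtain l m where lm: "X = {l,m}" "l \<in> L" "m \<in> L" "l \<noteq> m" using T2c[OF X] by blast
    obtain l' m' where lm': "Y = {l',m'}" "l' \<in> L" "m' \<in> L" "l' \<noteq> m'" using T2c[OF Y] by blast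
    have "{l - m, m - l} = {l' - m', m' - l'}" using e lm lm' hX unfolding h_def by metis
    then have c: "(l - m = l' - m' \<and> m - l = m' - l') \<or> (l - m = m' - l' \<and> m - l = l' - m')"
      by (auto simp: doubleton_eq_iff)
    have c1: "2 \<le> card (l - m)" "2 \<le> card (m - l)"
      using card_diff_lines[OF pp lm(2-4)] card_diff_lines[OF pp lm(3,2) lm(4)[symmetric]] q2 by auto
    from c show "X = Y"
    proof
      assume a: "l - m = l' - m' \<and> m - l = m' - l'"
      have "l = l'" using lines_eq_card[OF pp lm(2) lm'(2) _ _ c1(1)] a by auto
      moreover have "m = m'" using lines_eq_card[OF pp lm(3) lm'(3) _ _ c1(2)] a by auto
      ultimately show ?thesis using lm lm' by simp
    next
      assume a: "l - m = m' - l' \<and> m - l = l' - m'"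
      have "l = m'" using lines_eq_card[OF pp lm(2) lm'(3) _ _ c1(1)] a by auto
      moreover have "m = l'" using lines_eq_card[OF pp lm(3) lm'(2) _ _ c1(2)] a by auto
      ultimately show ?thesis using lm lm' by auto
    qed
  qed
  have "card (h ` T2) = card T2" using card_image[OF inj] .
  also have "\<dots> = card L choose 2" unfolding T2_def using n_subsets[OF finL[OF pp]] .
  finally show ?thesis using eq by simp
qed

lemma count_b: assumes n2: "2 \<le> n" and nq: "n < q" and H: "\<forall>(A,B)\<in>Good P L n q. \<exists>m\<in>L. B \<subseteq> m"
  shows "card ((\<lambda>(A,B). {A,B}) ` Good P L n q) = card L * (card L - 1) * (q choose n)"
proof -
  define D where "D = Sigma (Sigma L (\<lambda>l. L - {l})) (\<lambda>(l,m). {S. S \<subseteq> l - m \<and> card S = n})"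
  define F where "F = (\<lambda>((l::'p set,m::'p set),S::'p set). {S, m - l})"
  have eq: "(\<lambda>(A,B). {A,B}) ` Good P L n q = F ` D"
  proof
    show "(\<lambda>(A,B). {A,B}) ` Good P L n q \<subseteq> F ` D"
    proof
      fix S assume "S \<in> (\<lambda>(A,B). {A,B}) ` Good P L n q"
      then obtain A B where AB: "(A,B) \<in> Good P L n q" "S = {A,B}" by auto
      have G: "A \<subseteq> P" "B \<subseteq> P" "A \<inter> B = {}" "card A = n" "card B = q" "good L A B"
        using AB unfolding Good_def by auto
      obtain a0 where a0: "a0 \<in> A" using G(4) n2 by (metis card.empty ex_in_conv not_numeral_le_zero)
      obtain l where l: "l \<in> L" "A \<subseteq> l" "l \<inter> B = {}" using collinear[OF pp G(1,2,3,5,6) a0] by blast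
      obtain m where m: "m \<in> L" "B \<subseteq> m" using H AB(1) by blast
      have "2 \<le> card B" using G(5) n2 nq by simp
      then obtain b b' where bb: "b \<in> B" "b' \<in> B" "b \<noteq> b'"
        using two_elems by blast
      have Am: "A \<inter> m = {}"
      proof (rule ccontr)
        assume "A \<inter> m \<noteq> {}"
        then obtain a where a: "a \<in> A" "a \<in> m" by auto
        have "a \<noteq> b" "a \<noteq> b'" using a bb G(3) by auto
        then have "ln L a b = m" "ln L a b' = m" using ln_eq[OF pp m(1) a(2)] bb m(2) by auto
        then show False using G(6) a bb unfolding good_def by metis
      qed
      have lm: "l \<noteq> m" using a0 l Am by auto
      have Beq: "B = m - l" using card_subset_eq[OF finite_Diff[OF fin_line[OF pp m(1)]], of B]
        card_diff_lines[OF pp m(1) l(1) lm[symmetric]] G(5) l m by auto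
      have inD: "((l,m),A) \<in> D" unfolding D_def using l m lm Am G(4) by auto
      have "S = F ((l,m),A)" unfolding F_def using AB(2) Beq by simp
      then show "S \<in> F ` D" using inD by blast
    qed
    show "F ` D \<subseteq> (\<lambda>(A,B). {A,B}) ` Good P L n q"
    proof
      fix X assume "X \<in> F ` D"
      then obtain l m S where d: "X = {S, m - l}" "l \<in> L" "m \<in> L" "l \<noteq> m" "S \<subseteq> l - m" "card S = n"
        unfolding D_def F_def by auto
      have "(S, m - l) \<in> Good P L n q" unfolding Good_def
        using line_sub[OF pp d(2)] line_sub[OF pp d(3)] d card_diff_lines[OF pp d(3,2) d(4)[symmetric]]
          good_lines[OF pp d(2-4) d(5), of "m-l"] by auto
      then show "X \<in> (\<lambda>(A,B). {A,B}) ` Good P L n q" using d(1) by force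
    qed
  qed
  have inj: "inj_on F D"
  proof (rule inj_onI)
    fix x y assume x: "x \<in> D" and y: "y \<in> D" and e: "F x = F y"
    obtain l m S where dx: "x = ((l,m),S)" "l \<in> L" "m \<in> L" "l \<noteq> m" "S \<subseteq> l - m" "card S = n"
      using x unfolding D_def by auto
    obtain l' m' S' where dy: "y = ((l',m'),S')" "l' \<in> L" "m' \<in> L" "l' \<noteq> m'" "S' \<subseteq> l' - m'" "card S' = n"
      using y unfolding D_def by auto
    have c: "card (m - l) = q" "card (m' - l') = q"
      using card_diff_lines[OF pp dx(3,2) dx(4)[symmetric]] card_diff_lines[OF pp dy(3,2) dy(4)[symmetric]] by auto
    have "{S, m - l} = {S', m' - l'}" using e dx dy unfolding F_def by simp
    then have a: "S = S' \<and> m - l = m' - l'" using c dx(6) dy(6) nq by (auto simp: doubleton_eq_iff)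
    have "l = l'" using lines_eq_card[OF pp dx(2) dy(2), of S] a dx dy n2 by auto
    moreover have "m = m'" using lines_eq_card[OF pp dx(3) dy(3), of "m - l"] a c nq n2 by auto
    ultimately show "x = y" using a dx dy by simp
  qed
  have finL': "finite L" using finL[OF pp] .
  have cS: "card {S. S \<subseteq> l - m \<and> card S = n} = q choose n" if "l \<in> L" "m \<in> L" "l \<noteq> m" for l m
    using n_subsets[OF finite_Diff[OF fin_line[OF pp that(1)]]] card_diff_lines[OF pp that] by simp
  have finS: "finite {S. S \<subseteq> l - m \<and> card S = n}" if "l \<in> L" for l m
    using finite_Diff[OF fin_line[OF pp that], of m] by (simp add: finite_subset)
  have fin2: "finite (Sigma L (\<lambda>l. L - {l}))" using finL' by auto
  have "card D = (\<Sum>p\<in>Sigma L (\<lambda>l. L - {l}). card ((\<lambda>(l,m). {S. S \<subseteq> l - m \<and> card S = n}) p))"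
    unfolding D_def by (rule card_SigmaI[OF fin2]) (auto intro: finS)
  also have "\<dots> = (\<Sum>p\<in>Sigma L (\<lambda>l. L - {l}). q choose n)"
  proof (rule sum.cong[OF refl])
    fix p assume "p \<in> Sigma L (\<lambda>l. L - {l})"
    then obtain l m where "p = (l,m)" "l \<in> L" "m \<in> L" "l \<noteq> m" by auto
    then show "card ((\<lambda>(l,m). {S. S \<subseteq> l - m \<and> card S = n}) p) = q choose n" using cS by simp
  qed
  also have "\<dots> = card (Sigma L (\<lambda>l. L - {l})) * (q choose n)" by simp
  also have "card (Sigma L (\<lambda>l. L - {l})) = card L * (card L - 1)"
    using card_SigmaI[OF finL'] finL' by simp
  finally have "card D = card L * (card L - 1) * (q choose n)" .
  then show ?thesis using eq card_image[OF inj] by simp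
qed

end



theorem theorem3p5:
  fixes P :: "'p set" and L :: "'p set set" and q n :: nat
  assumes "projective_plane P L q" and "2 \<le> n" and "n \<le> q"
  shows "(n = q \<longrightarrow>
            n_emb P L (K_verts q q) (K_edges q q) = (q^2 + q + 1) choose 2)
       \<and> ((n < q \<and> (\<forall>\<phi>\<in>embeddings P L (K_verts n q) (K_edges n q). \<exists>l\<in>L. \<phi> ` KV q \<subseteq> l)) \<longrightarrow>
            n_emb P L (K_verts n q) (K_edges n q) = 2 * ((q^2 + q + 1) choose 2) * (q choose n))
       \<and> (n = q - 1 \<longrightarrow>
            (\<forall>\<phi>\<in>embeddings P L (K_verts n q) (K_edges n q). \<exists>l\<in>L. \<phi> ` KV q \<subseteq> l)
          \<and> n_emb P L (K_verts n q) (K_edges n q) = q^2 * (q + 1) * (q^2 + q + 1))"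
proof -
  note pp = assms(1)
  have q2: "2 \<le> q" using assms by simp
  have cL: "card L = q^2 + q + 1" using cardL[OF pp] .
  have two: "2 * (N choose 2) = N * (N - 1)" for N :: nat
  proof -
    have "even (N * (N - 1))" by (cases N) auto
    then show ?thesis by (simp add: choose_two)
  qed
  have nE: "n_emb P L (K_verts m q) (K_edges m q) = card ((\<lambda>(A,B). {A,B}) ` Good P L m q)"
    if "1 \<le> m" for m
    using n_emb_card[OF that, of q P L] q2 img_Good[OF pp] by simp
  have B: "n_emb P L (K_verts n q) (K_edges n q) = 2 * ((q^2 + q + 1) choose 2) * (q choose n)"
    if nq: "n < q" and H: "\<forall>\<phi>\<in>embeddings P L (K_verts n q) (K_edges n q). \<exists>l\<in>L. \<phi> ` KV q \<subseteq> l"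
  proof -
    have H': "\<forall>(A,B)\<in>Good P L n q. \<exists>m\<in>L. B \<subseteq> m"
    proof (clarify)
      fix A B assume "(A,B) \<in> Good P L n q"
      then obtain \<phi> where "\<phi> \<in> embeddings P L (K_verts n q) (K_edges n q)" "\<phi> ` KV q = B"
        using Good_emb[OF pp] by blast
      then show "\<exists>m\<in>L. B \<subseteq> m" using H by blast
    qed
    have "n_emb P L (K_verts n q) (K_edges n q) = card L * (card L - 1) * (q choose n)"
      using nE[of n] assms(2) count_b[OF pp assms(2) nq H'] by simp
    then show ?thesis using two[of "card L"] cL by simp
  qed
  have A: "n_emb P L (K_verts q q) (K_edges q q) = (q^2 + q + 1) choose 2"
    using nE[of q] q2 count_a[OF pp q2] cL by simp
  have C: "(\<forall>\<phi>\<in>embeddings P L (K_verts n q) (K_edges n q). \<exists>l\<in>L. \<phi> ` KV q \<subseteq> l)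
          \<and> n_emb P L (K_verts n q) (K_edges n q) = q^2 * (q + 1) * (q^2 + q + 1)" if nq: "n = q - 1"
  proof -
    have q3: "3 \<le> q" using nq assms by simp
    have col: "\<forall>\<phi>\<in>embeddings P L (K_verts n q) (K_edges n q). \<exists>l\<in>L. \<phi> ` KV q \<subseteq> l"
    proof
      fix \<phi> assume "\<phi> \<in> embeddings P L (K_verts n q) (K_edges n q)"
      then have "(\<phi> ` KU n, \<phi> ` KV q) \<in> Good P L n q" using emb_Good[OF pp] by blast
      then show "\<exists>l\<in>L. \<phi> ` KV q \<subseteq> l" using collinear_c[OF pp _ _ _ _ _ q3] nq
        unfolding Good_def by auto
    qed
    have "n < q" using nq q2 by simp
    then have e: "n_emb P L (K_verts n q) (K_edges n q) = 2 * ((q^2 + q + 1) choose 2) * (q choose n)"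
      using B col by blast
    have c1: "q choose n = q" using nq q2 binomial_symmetric[of "q-1" q] by simp
    have "2 * ((q^2 + q + 1) choose 2) = (q^2+q+1) * (q^2+q)" using two[of "q^2+q+1"] by simp
    then have "n_emb P L (K_verts n q) (K_edges n q) = (q^2+q+1) * (q^2+q) * q" using e c1 by simp
    also have "\<dots> = q^2 * (q + 1) * (q^2 + q + 1)" by (simp add: power2_eq_square algebra_simps)
    finally show ?thesis using col by simp
  qed
  show ?thesis using A B C by blast
qed


end
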